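(* Let $\Omega\subset\mathbb R^n$ be a bounded convex domain and $p>0$. (i) Suppose $u,v\in C^2(\Omega)\cap C(\overline{\Omega})$ are convex functions with $\det D^2 u\geq |u|^{-p}$ and $\det D^2 v\leq |v|^{-p}$ in $\Omega$, and $0\geq v\geq u$ on $\partial\Omega$. Then $v\geq u$ in $\Omega$. (ii) Let $k>0$. Suppose $u,v\in C^2(\Omega)\cap C(\overline{\Omega})$ are convex functions with $x\cdot Du-u>0$ and $x\cdot Dv-v>0$ in $\Omega$, $0\geq v\geq u$ on $\partial\Omega$, and $$\det D^2 u\geq |u|^{-p}(x\cdot Du-u)^{-k},\qquad \det D^2 v\leq |v|^{-p}(x\cdot Dv-v)^{-k}\quad\text{in }\Omega.$$ Then $v\geq u$ in $\Omega$. *)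

theory Defs
  imports "HOL-Analysis.Analysis" "HOL-Library.Extended_Real"
begin

definition C2_with :: "(real^'n) set \<Rightarrow> (real^'n \<Rightarrow> real) \<Rightarrow> (real^'n \<Rightarrow> real^'n)
    \<Rightarrow> (real^'n \<Rightarrow> real^'n^'n) \<Rightarrow> bool" where
  "C2_with S u Du Hu \<longleftrightarrow>
     (\<forall>x\<in>S. (u has_derivative (\<lambda>h. Du x \<bullet> h)) (at x)
           \<and> (Du has_derivative (\<lambda>h. Hu x *v h)) (at x))
     \<and> continuous_on S Hu"

definition negpow :: "real \<Rightarrow> real \<Rightarrow> ereal" where
  "negpow t p = (if t = 0 then \<infinity> else ereal (\<bar>t\<bar> powr (- p)))"

end

theory Submission
  imports Defs
begin


definition restr :: "'n set \<Rightarrow> real^'n^'n \<Rightarrow> real^'n^'n" where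
  "restr S A = (\<chi> i j. if i \<in> S \<and> j \<in> S then A$i$j else if i = j then 1 else 0)"

definition schur :: "'n \<Rightarrow> real^'n^'n \<Rightarrow> real^'n^'n" where
  "schur k A = (\<chi> i j. A$i$j - A$i$k * A$k$j / A$k$k)"

lemma mv_axis: "(A *v axis k 1) $ i = A$i$k"
  by (simp add: matrix_vector_mult_def axis_def if_distrib cong: if_cong)

lemma det_E:
  fixes c :: "'n::finite \<Rightarrow> real"
  assumes "k \<notin> S"
  shows "det (\<chi> i j. if i = j then 1 else if j = k \<and> i \<in> S then c i else (0::real)) = 1"
proof -
  let ?E = "(\<chi> i j. if i = j then 1 else if j = k \<and> i \<in> S then c i else (0::real))"
  define x where "x = (\<chi> j. if j \<in> S then c j else (0::real))"
  have tr: "transpose ?E = (\<chi> i. if i = k then row k (mat 1) + x else row i (mat 1))"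
    using assms by (auto simp: vec_eq_iff transpose_def row_def mat_def x_def)
  have xs: "x = (\<Sum>j\<in>S. c j *s row j (mat 1))"
    by (auto simp: vec_eq_iff x_def row_def mat_def sum_component if_distrib cong: if_cong)
  have "x \<in> vec.span {row j (mat 1 :: real^'n^'n) |j. j \<noteq> k}"
    unfolding xs
    apply (rule vec.span_sum)
    apply (rule vec.span_scale)
    apply (rule vec.span_base)
    using assms by auto
  then have "det (transpose ?E) = det (mat 1 :: real^'n^'n)"
    unfolding tr by (rule det_row_span)
  then show ?thesis by simp
qed

lemma det_restr_schur:
  assumes kS: "k \<notin> S" and a0: "A$k$k \<noteq> 0"
  shows "det (restr (insert k S) A) = A$k$k * det (restr S (schur k A))"
proof -
  define a where "a = A$k$k"
  define T where "T = insert k S"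
  define R where "R = restr T A"
  define N where "N = restr S (schur k A)"
  define E where "E = (\<chi> i j. if i = j then 1 else if j = k \<and> i \<in> S then - A$i$k / a else (0::real))"
  define r where "r = (\<chi> j. if j \<in> S then A$k$j else (0::real))"
  have dE: "det E = 1" unfolding E_def by (rule det_E[OF kS])
  have Ecomp: "(E ** R)$i$j = R$i$j + (if i \<in> S then - A$i$k / a * R$k$j else 0)" for i j
  proof (cases "i \<in> S")
    case True
    then have ik: "i \<noteq> k" using kS by auto
    have "(E ** R)$i$j = (\<Sum>l\<in>UNIV. (if l = i then R$i$j else 0) + (if l = k then - A$i$k / a * R$k$j else 0))"
      unfolding matrix_matrix_mult_def E_def using True ik
      by (auto intro!: sum.cong)
    also have "\<dots> = R$i$j + - A$i$k / a * R$k$j"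
      by (simp add: sum.distrib)
    finally show ?thesis using True by simp
  next
    case False
    have "(E ** R)$i$j = (\<Sum>l\<in>UNIV. (if l = i then R$i$j else 0))"
      unfolding matrix_matrix_mult_def E_def vec_lambda_beta
      by (rule sum.cong) (use False in auto)
    then show ?thesis using False by simp
  qed
  have M: "E ** R = (\<chi> i. if i = k then a *s axis k 1 + r else row i N)"
  proof -
    have "(E ** R)$i$j = (if i = k then a *s axis k 1 + r else row i N)$j" for i j
      using kS a0 unfolding Ecomp
      by (auto simp: R_def T_def N_def restr_def schur_def r_def row_def axis_def a_def)
    then show ?thesis by (simp add: vec_eq_iff)
  qed
  have "det R = det (E ** R)" by (simp add: det_mul dE)
  also have "\<dots> = det (\<chi> i. if i = k then a *s axis k 1 else row i N) +
                   det (\<chi> i. if i = k then r else row i N)"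
    unfolding M by (rule det_row_add)
  also have "det (\<chi> i. if i = k then a *s axis k 1 else row i N) = a * det (\<chi> i. if i = k then axis k 1 else row i N)"
    by (rule det_row_mul)
  also have "(\<chi> i. if i = k then axis k 1 else row i N) = N"
    using kS by (auto simp: vec_eq_iff N_def restr_def row_def axis_def)
  also have "det (\<chi> i. if i = k then r else row i N) = 0"
  proof (rule det_zero_column(1))
    show "column k (\<chi> i. if i = k then r else row i N) = 0"
      using kS by (auto simp: vec_eq_iff column_def N_def restr_def row_def r_def)
  qed
  finally show ?thesis by (simp add: R_def T_def N_def a_def)
qed

definition symm :: "real^'n^'n \<Rightarrow> bool" where
  "symm A \<longleftrightarrow> (\<forall>i j. A$i$j = A$j$i)"

lemma restr_empty: "restr {} A = mat 1"
  by (simp add: restr_def mat_def vec_eq_iff)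

lemma restr_UNIV: "restr UNIV A = A"
  by (simp add: restr_def vec_eq_iff)


lemma quad_sum: "x \<bullet> (A *v x) = (\<Sum>i\<in>UNIV. \<Sum>j\<in>UNIV. x$i * A$i$j * x$j)"
  by (simp add: inner_vec_def matrix_vector_mult_def sum_distrib_left mult.assoc)

lemma symm_swap: assumes "symm A" shows "y \<bullet> (A *v axis k 1) = (A *v y) $ k"
proof -
  have "y \<bullet> (A *v axis k 1) = (\<Sum>i\<in>UNIV. y$i * A$i$k)"
    by (simp add: inner_vec_def mv_axis)
  also have "\<dots> = (\<Sum>i\<in>UNIV. A$k$i * y$i)"
    using assms by (simp add: symm_def mult.commute)
  also have "\<dots> = (A *v y) $ k"
    by (simp add: matrix_vector_mult_def)
  finally show ?thesis .
qed

lemma quad_shift: assumes "symm A"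
  shows "(y + t *\<^sub>R axis k 1) \<bullet> (A *v (y + t *\<^sub>R axis k 1)) =
         y \<bullet> (A *v y) + 2*t*((A *v y)$k) + t^2 * A$k$k"
proof -
  have e1: "axis k 1 \<bullet> (A *v y) = (A *v y)$k" by (simp add: inner_axis')
  have e2: "axis k 1 \<bullet> (A *v axis k 1) = A$k$k" by (simp add: inner_axis' mv_axis)
  have "(y + t *\<^sub>R axis k 1) \<bullet> (A *v (y + t *\<^sub>R axis k 1)) =
     y \<bullet> (A *v y) + t * (y \<bullet> (A *v axis k 1)) + t * (axis k 1 \<bullet> (A *v y))
      + t * t * (axis k 1 \<bullet> (A *v axis k 1))"
    by (simp add: matrix_vector_right_distrib matrix_vector_mult_scaleR inner_add_left inner_add_right algebra_simps)
  then show ?thesis using e1 e2 symm_swap[OF assms, of y k] by (simp add: power2_eq_square algebra_simps)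
qed

lemma quad_schur: assumes "symm A"
  shows "y \<bullet> (schur k A *v y) = y \<bullet> (A *v y) - ((A *v y)$k)^2 / A$k$k"
proof -
  have "y \<bullet> (schur k A *v y) = (\<Sum>i\<in>UNIV. \<Sum>j\<in>UNIV. y$i * A$i$j * y$j)
      - (\<Sum>i\<in>UNIV. \<Sum>j\<in>UNIV. (y$i * A$i$k) * (A$k$j * y$j)) / A$k$k"
    by (simp add: quad_sum schur_def sum_subtractf sum_divide_distrib algebra_simps)
  also have "(\<Sum>i\<in>UNIV. \<Sum>j\<in>UNIV. (y$i * A$i$k) * (A$k$j * y$j)) = 
     (\<Sum>i\<in>UNIV. y$i * A$i$k) * (\<Sum>j\<in>UNIV. A$k$j * y$j)"
    by (simp add: sum_product)
  also have "(\<Sum>i\<in>UNIV. y$i * A$i$k) = (A *v y)$k"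
    using symm_swap[OF assms, of y k] by (simp add: inner_vec_def mv_axis)
  also have "(\<Sum>j\<in>UNIV. A$k$j * y$j) = (A *v y)$k"
    by (simp add: matrix_vector_mult_def)
  finally show ?thesis by (simp add: quad_sum power2_eq_square)
qed

lemma symm_schur: "symm A \<Longrightarrow> symm (schur k A)"
  by (simp add: symm_def schur_def mult.commute)


definition psdS :: "'n set \<Rightarrow> real^'n^'n \<Rightarrow> bool" where
  "psdS S A \<longleftrightarrow> (\<forall>x. (\<forall>i. i \<notin> S \<longrightarrow> x$i = 0) \<longrightarrow> 0 \<le> x \<bullet> (A *v x))"

definition leS :: "'n set \<Rightarrow> real^'n^'n \<Rightarrow> real^'n^'n \<Rightarrow> bool" where
  "leS S A B \<longleftrightarrow> (\<forall>x. (\<forall>i. i \<notin> S \<longrightarrow> x$i = 0) \<longrightarrow> x \<bullet> (A *v x) \<le> x \<bullet> (B *v x))"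

lemma quad_axis: "axis k 1 \<bullet> (A *v axis k 1) = A$k$k"
  by (simp add: inner_axis' mv_axis)

lemma diag_nonneg: assumes "psdS (insert k S) M" shows "0 \<le> M$k$k"
proof -
  have "\<forall>i. i \<notin> insert k S \<longrightarrow> (axis k 1 :: real^_) $ i = 0" by (simp add: axis_def)
  then have "0 \<le> axis k 1 \<bullet> (M *v axis k 1)" using assms unfolding psdS_def by blast
  then show ?thesis by (simp add: quad_axis)
qed

lemma diag_zero_det:
  assumes kS: "k \<notin> S" and sy: "symm M" and ps: "psdS (insert k S) M" and z: "M$k$k = 0"
  shows "det (restr (insert k S) M) = 0"
proof -
  have Mkj: "M$k$j = 0" if jS: "j \<in> S" for j
  proof (rule ccontr)
    assume nz: "M$k$j \<noteq> 0"
    define t where "t = - (M$j$j + 1) / (2 * M$k$j)"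
    have sup: "\<forall>i. i \<notin> insert k S \<longrightarrow> (axis j 1 + t *\<^sub>R axis k 1) $ i = 0"
      using jS by (auto simp: axis_def)
    have "0 \<le> (axis j 1 + t *\<^sub>R axis k 1) \<bullet> (M *v (axis j 1 + t *\<^sub>R axis k 1))"
      using ps sup unfolding psdS_def by blast
    also have "\<dots> = M$j$j + 2 * t * M$k$j"
      using quad_shift[OF sy, of "axis j 1" t k] z by (simp add: quad_axis mv_axis)
    also have "\<dots> = -1" using nz by (simp add: t_def field_simps)
    finally show False by simp
  qed
  show ?thesis
  proof (rule det_zero_row(1)[of k])
    show "row k (restr (insert k S) M) = 0"
      using Mkj z kS by (auto simp: row_def restr_def vec_eq_iff)
  qed
qed

lemma schur_psd:
  fixes M :: "real^'n^'n"
  assumes kS: "k \<notin> S" and sy: "symm M" and ps: "psdS (insert k S) M" and a: "M$k$k > 0"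
  shows "psdS S (schur k M)"
  unfolding psdS_def
proof (intro allI impI)
  fix y :: "real^'n" assume ys: "\<forall>i. i \<notin> S \<longrightarrow> y$i = 0"
  define t where "t = - (M *v y)$k / M$k$k"
  have sup: "\<forall>i. i \<notin> insert k S \<longrightarrow> (y + t *\<^sub>R axis k 1) $ i = 0"
    using ys by (auto simp: axis_def)
  have "0 \<le> (y + t *\<^sub>R axis k 1) \<bullet> (M *v (y + t *\<^sub>R axis k 1))"
    using ps sup unfolding psdS_def by blast
  also have "\<dots> = y \<bullet> (M *v y) + (2*t*((M *v y)$k) + t^2 * M$k$k)"
    using quad_shift[OF sy, of y t k] by simp
  also have "2*t*((M *v y)$k) + t^2 * M$k$k = (- (((M *v y)$k)^2)) / M$k$k"
    using a by (simp add: t_def field_simps power2_eq_square)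
  also have "y \<bullet> (M *v y) + (- (((M *v y)$k)^2)) / M$k$k = y \<bullet> (schur k M *v y)"
    using quad_schur[OF sy, of y k] by simp
  finally show "0 \<le> y \<bullet> (schur k M *v y)" .
qed

lemma schur_le:
  fixes A B :: "real^'n^'n"
  assumes kS: "k \<notin> S" and sA: "symm A" and sB: "symm B" and le: "leS (insert k S) A B"
    and a: "A$k$k > 0" and b: "B$k$k > 0"
  shows "leS S (schur k A) (schur k B)"
  unfolding leS_def
proof (intro allI impI)
  fix y :: "real^'n" assume ys: "\<forall>i. i \<notin> S \<longrightarrow> y$i = 0"
  define t where "t = - (B *v y)$k / B$k$k"
  define \<beta> where "\<beta> = (A *v y)$k"
  have sup: "\<forall>i. i \<notin> insert k S \<longrightarrow> (y + t *\<^sub>R axis k 1) $ i = 0"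
    using ys by (auto simp: axis_def)
  have e2: "2*t*((B *v y)$k) + t^2 * B$k$k = (- (((B *v y)$k)^2)) / B$k$k"
    using b by (simp add: t_def field_simps power2_eq_square)
  have "y \<bullet> (schur k B *v y) = (y + t *\<^sub>R axis k 1) \<bullet> (B *v (y + t *\<^sub>R axis k 1))"
    using quad_shift[OF sB, of y t k] quad_schur[OF sB, of y k] e2 by simp
  moreover have "(y + t *\<^sub>R axis k 1) \<bullet> (A *v (y + t *\<^sub>R axis k 1)) \<le> (y + t *\<^sub>R axis k 1) \<bullet> (B *v (y + t *\<^sub>R axis k 1))"
    using le sup unfolding leS_def by blast
  moreover have "(y + t *\<^sub>R axis k 1) \<bullet> (A *v (y + t *\<^sub>R axis k 1)) = y \<bullet> (A *v y) + 2*t*\<beta> + t^2 * A$k$k"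
    using quad_shift[OF sA, of y t k] by (simp add: \<beta>_def)
  moreover have "y \<bullet> (A *v y) + 2*t*\<beta> + t^2 * A$k$k \<ge> y \<bullet> (A *v y) - \<beta>^2 / A$k$k"
  proof -
    have "0 \<le> (A$k$k * t + \<beta>)^2 / A$k$k" using a by simp
    also have "(A$k$k * t + \<beta>)^2 / A$k$k = 2*t*\<beta> + t^2 * A$k$k + \<beta>^2 / A$k$k"
      using a by (simp add: field_simps power2_eq_square)
    finally show ?thesis by simp
  qed
  moreover have "y \<bullet> (schur k A *v y) = y \<bullet> (A *v y) - \<beta>^2 / A$k$k"
    using quad_schur[OF sA, of y k] by (simp add: \<beta>_def)
  ultimately show "y \<bullet> (schur k A *v y) \<le> y \<bullet> (schur k B *v y)" by linarith
qed

lemma det_mono_restr: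
  assumes "finite S"
  shows "\<forall>A B. symm A \<and> symm B \<and> psdS S A \<and> leS S A B \<longrightarrow>
           0 \<le> det (restr S A) \<and> det (restr S A) \<le> det (restr S B)"
  using assms
proof (induction S rule: finite_induct)
  case empty
  then show ?case by (simp add: restr_empty)
next
  case (insert k S)
  have nonneg: "0 \<le> det (restr (insert k S) M)" if sM: "symm M" and pM: "psdS (insert k S) M" for M
  proof (cases "M$k$k = 0")
    case True
    then show ?thesis using diag_zero_det[OF insert(2) sM pM] by simp
  next
    case False
    then have pos: "M$k$k > 0" using diag_nonneg[OF pM] by simp
    have "0 \<le> det (restr S (schur k M))"
      using insert(3)[rule_format, of "schur k M" "schur k M"] symm_schur[OF sM]
        schur_psd[OF insert(2) sM pM pos]
      by (simp add: leS_def)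
    then show ?thesis using det_restr_schur[OF insert(2) False] pos by simp
  qed
  show ?case
  proof (intro allI impI)
    fix A B assume h: "symm A \<and> symm B \<and> psdS (insert k S) A \<and> leS (insert k S) A B"
    then have sA: "symm A" and sB: "symm B" and pA: "psdS (insert k S) A" and le: "leS (insert k S) A B"
      by auto
    have pB: "psdS (insert k S) B"
      using pA le unfolding psdS_def leS_def by (meson order_trans)
    have "\<forall>i. i \<notin> insert k S \<longrightarrow> (axis k 1 :: real^_) $ i = 0" by (simp add: axis_def)
    then have "axis k 1 \<bullet> (A *v axis k 1) \<le> axis k 1 \<bullet> (B *v axis k 1)"
      using le unfolding leS_def by blast
    then have ab: "A$k$k \<le> B$k$k" by (simp add: quad_axis)
    show "0 \<le> det (restr (insert k S) A) \<and> det (restr (insert k S) A) \<le> det (restr (insert k S) B)"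
    proof (cases "A$k$k = 0")
      case True
      then show ?thesis using diag_zero_det[OF insert(2) sA pA] nonneg[OF sB pB] by simp
    next
      case False
      then have a: "A$k$k > 0" using diag_nonneg[OF pA] by simp
      then have b: "B$k$k > 0" using ab by simp
      have IH: "0 \<le> det (restr S (schur k A)) \<and> det (restr S (schur k A)) \<le> det (restr S (schur k B))"
        using insert(3)[rule_format, of "schur k A" "schur k B"] symm_schur[OF sA] symm_schur[OF sB]
          schur_psd[OF insert(2) sA pA a] schur_le[OF insert(2) sA sB le a b] by simp
      have dA: "det (restr (insert k S) A) = A$k$k * det (restr S (schur k A))"
        by (rule det_restr_schur[OF insert(2) False])
      have dB: "det (restr (insert k S) B) = B$k$k * det (restr S (schur k B))"
        using b by (intro det_restr_schur[OF insert(2)]) simp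
      have "A$k$k * det (restr S (schur k A)) \<le> B$k$k * det (restr S (schur k B))"
        using IH a b ab by (intro mult_mono) auto
      then show ?thesis unfolding dA dB using IH a by simp
    qed
  qed
qed

lemma det_mono:
  fixes A B :: "real^'n^'n"
  assumes "\<forall>i j. A$i$j = A$j$i" "\<forall>i j. B$i$j = B$j$i"
    and "\<forall>x. 0 \<le> x \<bullet> (A *v x)" and "\<forall>x. x \<bullet> (A *v x) \<le> x \<bullet> (B *v x)"
  shows "det A \<le> det B"
proof -
  have "0 \<le> det (restr UNIV A) \<and> det (restr UNIV A) \<le> det (restr UNIV B)"
    using det_mono_restr[OF finite_class.finite_UNIV, rule_format, of A B] assms
    unfolding symm_def psdS_def leS_def by simp
  then show ?thesis by (simp add: restr_UNIV)
qed



lemma line_deriv: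
  fixes F :: "'a::real_normed_vector \<Rightarrow> real"
  assumes "(F has_derivative F') (at (x + t *\<^sub>R h))"
  shows "((\<lambda>s. F (x + s *\<^sub>R h)) has_real_derivative F' h) (at t)"
proof -
  have lin: "linear F'" using assms has_derivative_linear by blast
  have l: "((\<lambda>s. x + s *\<^sub>R h) has_derivative (\<lambda>s. s *\<^sub>R h)) (at t)"
    by (auto intro!: derivative_eq_intros)
  have "((\<lambda>s. F (x + s *\<^sub>R h)) has_derivative (\<lambda>s. F' (s *\<^sub>R h))) (at t)"
    using has_derivative_compose[OF l assms] by (simp add: o_def)
  moreover have "(\<lambda>s. F' (s *\<^sub>R h)) = (*) (F' h)"
    using linear.scaleR[OF lin] by (auto simp: fun_eq_iff mult.commute)
  ultimately show ?thesis by (simp add: has_field_derivative_def)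
qed

lemma oned:
  fixes g g' :: "real \<Rightarrow> real"
  assumes r: "r > 0" and d: "\<forall>t. -r < t \<and> t < r \<longrightarrow> (g has_real_derivative g' t) (at t)"
    and d2: "(g' has_real_derivative c) (at 0)" and z: "g' 0 = 0" and c: "c > 0"
  shows "\<exists>t. 0 < t \<and> t < r \<and> g 0 < g t \<and> g 0 < g (-t)"
proof -
  obtain d1 where d1: "d1 > 0" "\<forall>h>0. h < d1 \<longrightarrow> g' 0 < g' (0 + h)"
    using DERIV_pos_inc_right[OF d2 c] by blast
  obtain d2 where d2: "d2 > 0" "\<forall>h>0. h < d2 \<longrightarrow> g' (0 - h) < g' 0"
    using DERIV_pos_inc_left[OF d2 c] by blast
  define t where "t = min r (min d1 d2) / 2"
  have t: "0 < t" "t < r" "t < d1" "t < d2" using r d1 d2 by (auto simp: t_def)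
  obtain z1 where z1: "0 < z1" "z1 < t" "g t - g 0 = (t - 0) * g' z1"
    using MVT2[of 0 t g g'] t d by auto
  obtain z2 where z2: "-t < z2" "z2 < 0" "g 0 - g (-t) = (0 - (-t)) * g' z2"
    using MVT2[of "-t" 0 g g'] t d by auto
  have "g' z1 > 0" using d1(2)[rule_format, of z1] z1 t z by simp
  moreover have "g' z2 < 0" using d2(2)[rule_format, of "-z2"] z2 t z by simp
  ultimately have "t * g' z1 > 0" "t * g' z2 < 0" using t by (auto simp: mult_pos_pos mult_pos_neg)
  then show ?thesis using z1 z2 t by (intro exI[of _ t]) auto
qed


lemma line_setup:
  fixes u :: "real^'n \<Rightarrow> real"
  assumes S: "open S" "x \<in> S" and du: "\<forall>y\<in>S. (u has_derivative (\<lambda>v. Du y \<bullet> v)) (at y)"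
    and hd: "(Du has_derivative (\<lambda>v. H *v v)) (at x)"
  shows "\<exists>r>0. (\<forall>t. -r < t \<and> t < r \<longrightarrow> x + t *\<^sub>R h \<in> S \<and>
            ((\<lambda>s. u (x + s *\<^sub>R h)) has_real_derivative (Du (x + t *\<^sub>R h) \<bullet> h)) (at t))
          \<and> ((\<lambda>s. Du (x + s *\<^sub>R h) \<bullet> h) has_real_derivative ((H *v h) \<bullet> h)) (at 0)"
proof -
  obtain e where e: "e > 0" "ball x e \<subseteq> S" using S open_contains_ball by blast
  define r where "r = e / (norm h + 1)"
  have nh: "norm h + 1 > 0" by (simp add: add_nonneg_pos)
  have r: "r > 0" using e nh by (simp add: r_def)
  have inS: "x + t *\<^sub>R h \<in> S" if "-r < t" "t < r" for t
  proof -
    have "\<bar>t\<bar> * norm h \<le> \<bar>t\<bar> * (norm h + 1)" by (simp add: mult_left_mono)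
    also have "\<dots> < r * (norm h + 1)" by (intro mult_strict_right_mono) (use that nh in auto)
    also have "\<dots> = e" using nh by (simp add: r_def)
    finally have "dist x (x + t *\<^sub>R h) < e" by (simp add: dist_norm)
    then show ?thesis using e by auto
  qed
  have "((\<lambda>s. u (x + s *\<^sub>R h)) has_real_derivative (Du (x + t *\<^sub>R h) \<bullet> h)) (at t)"
    if "-r < t" "t < r" for t
    using line_deriv[of u "\<lambda>v. Du (x + t *\<^sub>R h) \<bullet> v" x t h] du inS[OF that] by blast
  moreover have "((\<lambda>s. Du (x + s *\<^sub>R h) \<bullet> h) has_real_derivative ((H *v h) \<bullet> h)) (at 0)"
    using line_deriv[of "\<lambda>y. Du y \<bullet> h" "\<lambda>v. (H *v v) \<bullet> h" x 0 h] has_derivative_inner_left[OF hd, of h]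
    by simp
  ultimately show ?thesis using r inS by blast
qed

lemma convex_psd:
  fixes u :: "real^'n \<Rightarrow> real"
  assumes S: "open S" "x \<in> S" and cv: "convex_on S u"
    and du: "\<forall>y\<in>S. (u has_derivative (\<lambda>v. Du y \<bullet> v)) (at y)"
    and hd: "(Du has_derivative (\<lambda>v. H *v v)) (at x)"
  shows "0 \<le> (H *v h) \<bullet> h"
proof (rule ccontr)
  assume neg: "\<not> 0 \<le> (H *v h) \<bullet> h"
  obtain r where r: "r > 0"
    and L: "\<forall>t. -r < t \<and> t < r \<longrightarrow> x + t *\<^sub>R h \<in> S \<and>
            ((\<lambda>s. u (x + s *\<^sub>R h)) has_real_derivative (Du (x + t *\<^sub>R h) \<bullet> h)) (at t)"
    and L2: "((\<lambda>s. Du (x + s *\<^sub>R h) \<bullet> h) has_real_derivative ((H *v h) \<bullet> h)) (at 0)"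
    using line_setup[OF S du hd, of h] by blast
  define g where "g = (\<lambda>s. - (u (x + s *\<^sub>R h) - u x - (Du x \<bullet> h) * s))"
  define g' where "g' = (\<lambda>s. - (Du (x + s *\<^sub>R h) \<bullet> h - Du x \<bullet> h))"
  have gd: "\<forall>t. -r < t \<and> t < r \<longrightarrow> (g has_real_derivative g' t) (at t)"
  proof (intro allI impI)
    fix t assume "-r < t \<and> t < r"
    then have "((\<lambda>s. u (x + s *\<^sub>R h)) has_real_derivative (Du (x + t *\<^sub>R h) \<bullet> h)) (at t)"
      using L by blast
    then show "(g has_real_derivative g' t) (at t)"
      unfolding g_def g'_def by (auto intro!: derivative_eq_intros)
  qed
  have g'd: "(g' has_real_derivative (- ((H *v h) \<bullet> h))) (at 0)"
    unfolding g'_def using L2 by (auto intro!: derivative_eq_intros)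
  obtain t where t: "0 < t" "t < r" "g 0 < g t" "g 0 < g (-t)"
    using oned[OF r gd g'd] neg by (auto simp: g'_def)
  have p: "x + t *\<^sub>R h \<in> S" "x + (-t) *\<^sub>R h \<in> S"
    using L[rule_format, of t] L[rule_format, of "-t"] t r by auto
  have "(1 - 1/2) *\<^sub>R (x + t *\<^sub>R h) + (1/2) *\<^sub>R (x + (-t) *\<^sub>R h) = ((1 - 1/2) + 1/2) *\<^sub>R x + ((1 - 1/2) * t + (1/2) * (-t)) *\<^sub>R h"
    by (simp only: scaleR_add_right scaleR_add_left scaleR_scaleR) (simp only: add_ac)
  also have "\<dots> = x" by simp
  finally have "u x = u ((1 - 1/2) *\<^sub>R (x + t *\<^sub>R h) + (1/2) *\<^sub>R (x + (-t) *\<^sub>R h))"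
    by simp
  also have "\<dots> \<le> (1 - 1/2) * u (x + t *\<^sub>R h) + (1/2) * u (x + (-t) *\<^sub>R h)"
    using convex_onD[OF cv, of "1/2" "x + t *\<^sub>R h" "x + (-t) *\<^sub>R h"] p by simp
  finally show False using t(3,4) by (simp add: g_def algebra_simps)
qed

lemma max_nsd:
  fixes w :: "real^'n \<Rightarrow> real"
  assumes S: "open S" "x \<in> S" and mx: "\<forall>y\<in>S. w y \<le> w x"
    and du: "\<forall>y\<in>S. (w has_derivative (\<lambda>v. Dw y \<bullet> v)) (at y)"
    and hd: "(Dw has_derivative (\<lambda>v. H *v v)) (at x)"
  shows "Dw x = 0" "(H *v h) \<bullet> h \<le> 0"
proof -
  obtain r where r: "r > 0"
    and L: "\<forall>t. -r < t \<and> t < r \<longrightarrow> x + t *\<^sub>R (Dw x) \<in> S \<and>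
            ((\<lambda>s. w (x + s *\<^sub>R Dw x)) has_real_derivative (Dw (x + t *\<^sub>R Dw x) \<bullet> Dw x)) (at t)"
    using line_setup[OF S du hd, of "Dw x"] by blast
  have d1: "((\<lambda>s. w (x + s *\<^sub>R Dw x)) has_real_derivative (Dw x \<bullet> Dw x)) (at 0)"
    using L[rule_format, of 0] r by simp
  have le: "\<forall>y. \<bar>0 - y\<bar> < r \<longrightarrow> w (x + y *\<^sub>R Dw x) \<le> w (x + 0 *\<^sub>R Dw x)"
  proof (intro allI impI)
    fix y :: real assume "\<bar>0 - y\<bar> < r"
    then have "-r < y \<and> y < r" by auto
    then have "x + y *\<^sub>R Dw x \<in> S" using L by blast
    then show "w (x + y *\<^sub>R Dw x) \<le> w (x + 0 *\<^sub>R Dw x)" using mx by simp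
  qed
  have "Dw x \<bullet> Dw x = 0" by (rule DERIV_local_max[OF d1 r le])
  then show z: "Dw x = 0" by simp
  show "(H *v h) \<bullet> h \<le> 0"
  proof (rule ccontr)
    assume pos: "\<not> (H *v h) \<bullet> h \<le> 0"
    obtain r where r: "r > 0"
      and L: "\<forall>t. -r < t \<and> t < r \<longrightarrow> x + t *\<^sub>R h \<in> S \<and>
            ((\<lambda>s. w (x + s *\<^sub>R h)) has_real_derivative (Dw (x + t *\<^sub>R h) \<bullet> h)) (at t)"
      and L2: "((\<lambda>s. Dw (x + s *\<^sub>R h) \<bullet> h) has_real_derivative ((H *v h) \<bullet> h)) (at 0)"
      using line_setup[OF S du hd, of h] by blast
    obtain t where t: "0 < t" "t < r" "w (x + 0 *\<^sub>R h) < w (x + t *\<^sub>R h)"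
      using oned[of r "\<lambda>s. w (x + s *\<^sub>R h)" "\<lambda>s. Dw (x + s *\<^sub>R h) \<bullet> h", OF r _ L2] L pos z
      by auto
    then show False using mx L by force
  qed
qed


lemma schwarz_aux:
  fixes u :: "real^'n \<Rightarrow> real"
  assumes ball: "\<forall>y. norm (y - x) < \<rho> \<longrightarrow> y \<in> S"
    and du: "\<forall>y\<in>S. (u has_derivative (\<lambda>v. Du y \<bullet> v)) (at y)"
    and est: "\<forall>y. norm (y - x) < \<rho> \<longrightarrow> norm (Du y - Du x - H *v (y - x)) \<le> \<epsilon> * norm (y - x)"
    and t: "t > 0" "t * (norm h + norm k) < \<rho>" and eps: "\<epsilon> \<ge> 0"
  shows "\<bar>u (x + t *\<^sub>R h + t *\<^sub>R k) - u (x + t *\<^sub>R h) - u (x + t *\<^sub>R k) + u x - t^2 * ((H *v k) \<bullet> h)\<bar>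
           \<le> \<epsilon> * t^2 * ((2*norm h + norm k) * norm h)"
proof -
  define \<phi> where "\<phi> = (\<lambda>s. u ((x + t *\<^sub>R k) + s *\<^sub>R h) - u (x + s *\<^sub>R h))"
  define \<phi>' where "\<phi>' = (\<lambda>s. Du ((x + t *\<^sub>R k) + s *\<^sub>R h) \<bullet> h - Du (x + s *\<^sub>R h) \<bullet> h)"
  have n1: "norm ((x + t *\<^sub>R k + s *\<^sub>R h) - x) \<le> t * (norm h + norm k)"
    and n2: "norm ((x + s *\<^sub>R h) - x) \<le> t * norm h"
    if "0 \<le> s" "s \<le> t" for s
  proof -
    have "norm ((x + t *\<^sub>R k + s *\<^sub>R h) - x) = norm (t *\<^sub>R k + s *\<^sub>R h)" by simp
    also have "\<dots> \<le> norm (t *\<^sub>R k) + norm (s *\<^sub>R h)" by (rule norm_triangle_ineq)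
    also have "\<dots> = t * norm k + s * norm h" using that t by simp
    also have "\<dots> \<le> t * norm k + t * norm h" using that by (simp add: mult_right_mono)
    finally show "norm ((x + t *\<^sub>R k + s *\<^sub>R h) - x) \<le> t * (norm h + norm k)" by (simp add: algebra_simps)
    have "norm ((x + s *\<^sub>R h) - x) = s * norm h" using that by simp
    also have "\<dots> \<le> t * norm h" using that by (simp add: mult_right_mono)
    finally show "norm ((x + s *\<^sub>R h) - x) \<le> t * norm h" .
  qed
  have th: "t * norm h \<le> t * (norm h + norm k)" using t by (simp add: mult_left_mono)
  have der: "(\<phi> has_real_derivative \<phi>' s) (at s)" if "0 \<le> s" "s \<le> t" for s
  proof -
    have "norm ((x + t *\<^sub>R k + s *\<^sub>R h) - x) < \<rho>" using n1[OF that] t(2) by linarith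
    then have i1: "x + t *\<^sub>R k + s *\<^sub>R h \<in> S" using ball by blast
    have "norm ((x + s *\<^sub>R h) - x) < \<rho>" using n2[OF that] th t(2) by linarith
    then have i2: "x + s *\<^sub>R h \<in> S" using ball by blast
    have d1: "((\<lambda>s. u ((x + t *\<^sub>R k) + s *\<^sub>R h)) has_real_derivative Du ((x + t *\<^sub>R k) + s *\<^sub>R h) \<bullet> h) (at s)"
      using line_deriv[of u "\<lambda>v. Du ((x + t *\<^sub>R k) + s *\<^sub>R h) \<bullet> v" "x + t *\<^sub>R k" s h] du i1 by blast
    have d2: "((\<lambda>s. u (x + s *\<^sub>R h)) has_real_derivative Du (x + s *\<^sub>R h) \<bullet> h) (at s)"
      using line_deriv[of u "\<lambda>v. Du (x + s *\<^sub>R h) \<bullet> v" x s h] du i2 by blast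
    show ?thesis unfolding \<phi>_def \<phi>'_def using DERIV_diff[OF d1 d2] by simp
  qed
  obtain \<xi> where xi: "0 < \<xi>" "\<xi> < t" "\<phi> t - \<phi> 0 = (t - 0) * \<phi>' \<xi>"
    using MVT2[of 0 t \<phi> \<phi>'] t der by auto
  have \<Delta>: "\<phi> t - \<phi> 0 = u (x + t *\<^sub>R h + t *\<^sub>R k) - u (x + t *\<^sub>R h) - u (x + t *\<^sub>R k) + u x"
    by (simp add: \<phi>_def add_ac)
  define y1 where "y1 = x + t *\<^sub>R k + \<xi> *\<^sub>R h"
  define y2 where "y2 = x + \<xi> *\<^sub>R h"
  have ny1: "norm (y1 - x) \<le> t * (norm h + norm k)" using n1[of \<xi>] xi by (simp add: y1_def)
  have ny2: "norm (y2 - x) \<le> t * norm h" using n2[of \<xi>] xi by (simp add: y2_def)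
  have "norm (y1 - x) < \<rho>" using ny1 t(2) by linarith
  then have e1: "norm (Du y1 - Du x - H *v (y1 - x)) \<le> \<epsilon> * norm (y1 - x)"
    using est by blast
  have "norm (y2 - x) < \<rho>" using ny2 th t(2) by linarith
  then have e2: "norm (Du y2 - Du x - H *v (y2 - x)) \<le> \<epsilon> * norm (y2 - x)"
    using est by blast
  have lin: "H *v (y1 - x) - H *v (y2 - x) = t *\<^sub>R (H *v k)"
    by (simp add: y1_def y2_def matrix_vector_mult_scaleR matrix_vector_right_distrib)
  have "\<phi>' \<xi> - t * ((H *v k) \<bullet> h) = ((Du y1 - Du x - H *v (y1 - x)) - (Du y2 - Du x - H *v (y2 - x))) \<bullet> h"
  proof -
    have "((Du y1 - Du x - H *v (y1 - x)) - (Du y2 - Du x - H *v (y2 - x))) = Du y1 - Du y2 - (H *v (y1 - x) - H *v (y2 - x))"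
      by (simp add: algebra_simps)
    also have "\<dots> = Du y1 - Du y2 - t *\<^sub>R (H *v k)" by (simp only: lin)
    finally have eq: "((Du y1 - Du x - H *v (y1 - x)) - (Du y2 - Du x - H *v (y2 - x))) = Du y1 - Du y2 - t *\<^sub>R (H *v k)" .
    have ph: "\<phi>' \<xi> = Du y1 \<bullet> h - Du y2 \<bullet> h" by (simp add: \<phi>'_def y1_def y2_def)
    show ?thesis unfolding eq ph by (simp add: inner_diff_left)
  qed
  also have "\<bar>\<dots>\<bar> \<le> norm ((Du y1 - Du x - H *v (y1 - x)) - (Du y2 - Du x - H *v (y2 - x))) * norm h"
    by (rule Cauchy_Schwarz_ineq2)
  also have "\<dots> \<le> (\<epsilon> * norm (y1 - x) + \<epsilon> * norm (y2 - x)) * norm h"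
  proof (rule mult_right_mono)
    have "norm ((Du y1 - Du x - H *v (y1 - x)) - (Du y2 - Du x - H *v (y2 - x)))
       \<le> norm (Du y1 - Du x - H *v (y1 - x)) + norm (Du y2 - Du x - H *v (y2 - x))"
      by (rule norm_triangle_ineq4)
    then show "norm ((Du y1 - Du x - H *v (y1 - x)) - (Du y2 - Du x - H *v (y2 - x)))
       \<le> \<epsilon> * norm (y1 - x) + \<epsilon> * norm (y2 - x)" using e1 e2 by linarith
  qed simp
  also have "\<dots> \<le> (\<epsilon> * (t * (norm h + norm k)) + \<epsilon> * (t * norm h)) * norm h"
    using ny1 ny2 eps by (intro mult_right_mono add_mono mult_left_mono) auto
  also have "\<dots> = \<epsilon> * t * ((2*norm h + norm k) * norm h)" by (simp add: algebra_simps)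
  finally have b: "\<bar>\<phi>' \<xi> - t * ((H *v k) \<bullet> h)\<bar> \<le> \<epsilon> * t * ((2*norm h + norm k) * norm h)" .
  have "u (x + t *\<^sub>R h + t *\<^sub>R k) - u (x + t *\<^sub>R h) - u (x + t *\<^sub>R k) + u x - t^2 * ((H *v k) \<bullet> h)
        = t * (\<phi>' \<xi> - t * ((H *v k) \<bullet> h))"
    using \<Delta> xi by (simp add: power2_eq_square algebra_simps)
  also have "\<bar>\<dots>\<bar> = t * \<bar>\<phi>' \<xi> - t * ((H *v k) \<bullet> h)\<bar>" using t by (simp add: abs_mult)
  also have "\<dots> \<le> t * (\<epsilon> * t * ((2*norm h + norm k) * norm h))" using b t by (simp add: mult_left_mono)
  also have "\<dots> = \<epsilon> * t^2 * ((2*norm h + norm k) * norm h)" by (simp add: power2_eq_square algebra_simps)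
  finally show ?thesis .
qed


lemma eps_zero:
  fixes d C :: real
  assumes "C \<ge> 0" "\<And>\<epsilon>. \<epsilon> > 0 \<Longrightarrow> \<bar>d\<bar> \<le> \<epsilon> * C"
  shows "d = 0"
proof (rule ccontr)
  assume "d \<noteq> 0"
  then have dp: "\<bar>d\<bar> > 0" by simp
  have "\<bar>d\<bar> \<le> (\<bar>d\<bar> / (C + 1)) * C" using assms(2)[of "\<bar>d\<bar> / (C + 1)"] dp assms(1) by simp
  also have "\<dots> < \<bar>d\<bar>" using dp assms(1) by (simp add: field_simps)
  finally show False by simp
qed

lemma hess_symm:
  fixes u :: "real^'n \<Rightarrow> real"
  assumes S: "open S" "x \<in> S" and du: "\<forall>y\<in>S. (u has_derivative (\<lambda>v. Du y \<bullet> v)) (at y)"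
    and hd: "(Du has_derivative (\<lambda>v. H *v v)) (at x)"
  shows "(H *v k) \<bullet> h = (H *v h) \<bullet> k"
proof -
  obtain e where e: "e > 0" "ball x e \<subseteq> S" using S open_contains_ball by blast
  define C where "C = (2*norm h + norm k) * norm h + (2*norm k + norm h) * norm k"
  have C: "C \<ge> 0" by (simp add: C_def)
  have "\<bar>(H *v k) \<bullet> h - (H *v h) \<bullet> k\<bar> \<le> \<epsilon> * C" if ep: "\<epsilon> > 0" for \<epsilon>
  proof -
    obtain \<delta> where \<delta>: "\<delta> > 0" "\<forall>y. norm (y - x) < \<delta> \<longrightarrow> norm (Du y - Du x - H *v (y - x)) \<le> \<epsilon> * norm (y - x)"
      using hd ep unfolding has_derivative_at_alt by blast
    define \<rho> where "\<rho> = min e \<delta>"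
    have \<rho>: "\<rho> > 0" using e \<delta> by (simp add: \<rho>_def)
    define t where "t = \<rho> / (2 * (norm h + norm k + 1))"
    have np: "norm h + norm k + 1 > 0" by (simp add: add_nonneg_pos)
    have t0: "t > 0" using \<rho> np by (simp add: t_def)
    have "t * (norm h + norm k) \<le> t * (norm h + norm k + 1)" using t0 by simp
    also have "\<dots> = \<rho> / 2" using np by (simp add: t_def field_simps)
    also have "\<dots> < \<rho>" using \<rho> by simp
    finally have tr: "t * (norm h + norm k) < \<rho>" .
    have tr2: "t * (norm k + norm h) < \<rho>" using tr by (simp add: add.commute)
    have ball: "\<forall>y. norm (y - x) < \<rho> \<longrightarrow> y \<in> S"
      using e by (auto simp: \<rho>_def dist_norm norm_minus_commute subset_eq)
    have est: "\<forall>y. norm (y - x) < \<rho> \<longrightarrow> norm (Du y - Du x - H *v (y - x)) \<le> \<epsilon> * norm (y - x)"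
      using \<delta> by (auto simp: \<rho>_def)
    define \<Delta> where "\<Delta> = u (x + t *\<^sub>R h + t *\<^sub>R k) - u (x + t *\<^sub>R h) - u (x + t *\<^sub>R k) + u x"
    have A1: "\<bar>\<Delta> - t^2 * ((H *v k) \<bullet> h)\<bar> \<le> \<epsilon> * t^2 * ((2*norm h + norm k) * norm h)"
      using schwarz_aux[OF ball du est t0 tr] ep unfolding \<Delta>_def by simp
    have same: "x + t *\<^sub>R k + t *\<^sub>R h = x + t *\<^sub>R h + t *\<^sub>R k" by (simp add: add_ac)
    have D2: "u (x + t *\<^sub>R h + t *\<^sub>R k) - u (x + t *\<^sub>R k) - u (x + t *\<^sub>R h) + u x = \<Delta>"
      unfolding \<Delta>_def by simp
    have A2: "\<bar>\<Delta> - t^2 * ((H *v h) \<bullet> k)\<bar> \<le> \<epsilon> * t^2 * ((2*norm k + norm h) * norm k)"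
      using schwarz_aux[OF ball du est t0 tr2] ep unfolding same D2 by simp
    have "t^2 * ((H *v k) \<bullet> h - (H *v h) \<bullet> k) = (\<Delta> - t^2 * ((H *v h) \<bullet> k)) - (\<Delta> - t^2 * ((H *v k) \<bullet> h))"
      by (simp add: algebra_simps)
    then have "\<bar>t^2 * ((H *v k) \<bullet> h - (H *v h) \<bullet> k)\<bar> \<le> \<bar>\<Delta> - t^2 * ((H *v h) \<bullet> k)\<bar> + \<bar>\<Delta> - t^2 * ((H *v k) \<bullet> h)\<bar>"
      by (metis abs_triangle_ineq4)
    also have "\<dots> \<le> t^2 * (\<epsilon> * C)"
    proof -
      have "\<epsilon> * t^2 * ((2*norm k + norm h) * norm k) + \<epsilon> * t^2 * ((2*norm h + norm k) * norm h) = t^2 * (\<epsilon> * C)"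
        by (simp add: C_def algebra_simps)
      then show ?thesis using A1 A2 by linarith
    qed
    finally have "t^2 * \<bar>(H *v k) \<bullet> h - (H *v h) \<bullet> k\<bar> \<le> t^2 * (\<epsilon> * C)" by (simp add: abs_mult)
    then show ?thesis using t0 by simp
  qed
  then have "(H *v k) \<bullet> h - (H *v h) \<bullet> k = 0" by (intro eps_zero[OF C])
  then show ?thesis by simp
qed


lemma hess_symm_entries:
  fixes u :: "real^'n \<Rightarrow> real"
  assumes S: "open S" "x \<in> S" and du: "\<forall>y\<in>S. (u has_derivative (\<lambda>v. Du y \<bullet> v)) (at y)"
    and hd: "(Du has_derivative (\<lambda>v. H *v v)) (at x)"
  shows "\<forall>i j. H$i$j = H$j$i"
proof (intro allI)
  fix i j
  have "(H *v axis j 1) \<bullet> axis i 1 = (H *v axis i 1) \<bullet> axis j 1"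
    by (rule hess_symm[OF S du hd])
  then show "H$i$j = H$j$i" by (simp add: inner_axis mv_axis)
qed

lemma core:
  fixes \<Omega> :: "(real^'n) set" and u v :: "real^'n \<Rightarrow> real"
  assumes op: "open \<Omega>" and bd: "bounded \<Omega>" and ne: "\<Omega> \<noteq> {}"
    and Cu: "C2_with \<Omega> u Du Hu" and Cv: "C2_with \<Omega> v Dv Hv"
    and cu: "continuous_on (closure \<Omega>) u" and cvc: "continuous_on (closure \<Omega>) v"
    and cvx: "convex_on \<Omega> u"
    and fr: "\<forall>x\<in>frontier \<Omega>. 0 \<ge> v x \<and> v x \<ge> u x"
    and detpos: "\<forall>x\<in>\<Omega>. u x \<noteq> 0 \<and> det (Hu x) > 0"
    and strict: "\<forall>x\<in>\<Omega>. Du x = Dv x \<longrightarrow> v x < u x \<longrightarrow> u x < 0 \<longrightarrow> det (Hv x) < det (Hu x)"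
  shows "\<forall>x\<in>\<Omega>. v x \<ge> u x"
proof -
  have du: "\<forall>y\<in>\<Omega>. (u has_derivative (\<lambda>h. Du y \<bullet> h)) (at y)"
    and hu: "\<forall>y\<in>\<Omega>. (Du has_derivative (\<lambda>h. Hu y *v h)) (at y)"
    using Cu unfolding C2_with_def by auto
  have dv: "\<forall>y\<in>\<Omega>. (v has_derivative (\<lambda>h. Dv y \<bullet> h)) (at y)"
    and hv: "\<forall>y\<in>\<Omega>. (Dv has_derivative (\<lambda>h. Hv y *v h)) (at y)"
    using Cv unfolding C2_with_def by auto
  have cpt: "compact (closure \<Omega>)"
    using bounded_closure[OF bd] by (simp add: compact_eq_bounded_closed)
  have cne: "closure \<Omega> \<noteq> {}" using ne by simp
  have clo: "closure \<Omega> = \<Omega> \<union> frontier \<Omega>"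
    using op by (auto simp: frontier_def interior_open closure_subset[THEN subsetD])
  have sub: "\<Omega> \<subseteq> closure \<Omega>" by (rule closure_subset)
  have neg: "u x < 0" if xO: "x \<in> \<Omega>" for x
  proof (rule ccontr)
    assume "\<not> u x < 0"
    then have ux: "u x > 0" using detpos xO by force
    obtain y where y: "y \<in> closure \<Omega>" "\<forall>z\<in>closure \<Omega>. u z \<le> u y"
      using continuous_attains_sup[OF cpt cne cu] by blast
    have "u y \<ge> u x" using y sub xO by blast
    then have "u y > 0" using ux by simp
    then have "y \<notin> frontier \<Omega>" using fr by force
    then have yO: "y \<in> \<Omega>" using y clo by blast
    have mx: "\<forall>z\<in>\<Omega>. u z \<le> u y" using y sub by blast
    have nsd: "(Hu y *v h) \<bullet> h \<le> 0" for h
      using max_nsd(2)[OF op yO mx du hu[rule_format, OF yO]] by blast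
    have psd: "0 \<le> (Hu y *v h) \<bullet> h" for h
      by (rule convex_psd[OF op yO cvx du hu[rule_format, OF yO]])
    have sy: "\<forall>i j. Hu y$i$j = Hu y$j$i" by (rule hess_symm_entries[OF op yO du hu[rule_format, OF yO]])
    have "det (Hu y) \<le> det (mat 0 :: real^'n^'n)"
    proof (rule det_mono)
      show "\<forall>i j. Hu y$i$j = Hu y$j$i" by (rule sy)
      show "\<forall>i j. (mat 0 :: real^'n^'n)$i$j = (mat 0 :: real^'n^'n)$j$i" by (simp add: mat_def)
      show "\<forall>x. 0 \<le> x \<bullet> (Hu y *v x)" using psd by (simp add: inner_commute)
      show "\<forall>x. x \<bullet> (Hu y *v x) \<le> x \<bullet> ((mat 0 :: real^'n^'n) *v x)" using nsd by (simp add: inner_commute)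
    qed
    moreover have "det (mat 0 :: real^'n^'n) = 0" by (rule det_0)
    moreover have "det (Hu y) > 0" using detpos yO by blast
    ultimately show False by linarith
  qed
  show ?thesis
  proof (rule ccontr)
    assume "\<not> (\<forall>x\<in>\<Omega>. v x \<ge> u x)"
    then obtain x where xO: "x \<in> \<Omega>" and vx: "v x < u x" by force
    have cw: "continuous_on (closure \<Omega>) (\<lambda>z. u z - v z)" using cu cvc by (intro continuous_on_diff)
    obtain y where y: "y \<in> closure \<Omega>" "\<forall>z\<in>closure \<Omega>. u z - v z \<le> u y - v y"
      using continuous_attains_sup[OF cpt cne cw] by blast
    have "u y - v y \<ge> u x - v x" using y sub xO by blast
    then have pos: "u y - v y > 0" using vx by simp
    then have "y \<notin> frontier \<Omega>" using fr by force
    then have yO: "y \<in> \<Omega>" using y clo by blast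
    have mx: "\<forall>z\<in>\<Omega>. u z - v z \<le> u y - v y" using y sub by blast
    have dw: "\<forall>z\<in>\<Omega>. ((\<lambda>z. u z - v z) has_derivative (\<lambda>h. (Du z - Dv z) \<bullet> h)) (at z)"
    proof
      fix z assume "z \<in> \<Omega>"
      then have "((\<lambda>z. u z - v z) has_derivative (\<lambda>h. Du z \<bullet> h - Dv z \<bullet> h)) (at z)"
        using du dv by (intro has_derivative_diff) auto
      then show "((\<lambda>z. u z - v z) has_derivative (\<lambda>h. (Du z - Dv z) \<bullet> h)) (at z)"
        by (simp add: inner_diff_left)
    qed
    have hw: "((\<lambda>z. Du z - Dv z) has_derivative (\<lambda>h. (Hu y - Hv y) *v h)) (at y)"
    proof -
      have "((\<lambda>z. Du z - Dv z) has_derivative (\<lambda>h. Hu y *v h - Hv y *v h)) (at y)"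
        using hu hv yO by (intro has_derivative_diff) auto
      then show ?thesis by (simp add: matrix_vector_mult_diff_rdistrib)
    qed
    have Dz: "Du y - Dv y = 0" by (rule max_nsd(1)[OF op yO mx dw hw])
    have le: "((Hu y - Hv y) *v h) \<bullet> h \<le> 0" for h by (rule max_nsd(2)[OF op yO mx dw hw])
    have psd: "0 \<le> (Hu y *v h) \<bullet> h" for h
      by (rule convex_psd[OF op yO cvx du hu[rule_format, OF yO]])
    have "det (Hu y) \<le> det (Hv y)"
    proof (rule det_mono)
      show "\<forall>i j. Hu y$i$j = Hu y$j$i" by (rule hess_symm_entries[OF op yO du hu[rule_format, OF yO]])
      show "\<forall>i j. Hv y$i$j = Hv y$j$i" by (rule hess_symm_entries[OF op yO dv hv[rule_format, OF yO]])
      show "\<forall>x. 0 \<le> x \<bullet> (Hu y *v x)" using psd by (simp add: inner_commute)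
      show "\<forall>x. x \<bullet> (Hu y *v x) \<le> x \<bullet> (Hv y *v x)"
        using le by (simp add: inner_commute matrix_vector_mult_diff_rdistrib inner_diff_right)
    qed
    moreover have "det (Hv y) < det (Hu y)"
      using strict yO Dz pos neg[OF yO] by simp
    ultimately show False by simp
  qed
qed

theorem lemma2p1:
  fixes \<Omega> :: "(real^'n) set" and p :: real
  assumes "open \<Omega>" and "connected \<Omega>" and "\<Omega> \<noteq> {}" and "convex \<Omega>" and "bounded \<Omega>"
    and "p > 0"
  shows
   "(\<forall>(u :: real^'n \<Rightarrow> real) v Du Dv Hu Hv.
        C2_with \<Omega> u Du Hu \<and> C2_with \<Omega> v Dv Hv
      \<and> continuous_on (closure \<Omega>) u \<and> continuous_on (closure \<Omega>) v
      \<and> convex_on \<Omega> u \<and> convex_on \<Omega> v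
      \<and> (\<forall>x\<in>\<Omega>. ereal (det (Hu x)) \<ge> negpow (u x) p)
      \<and> (\<forall>x\<in>\<Omega>. ereal (det (Hv x)) \<le> negpow (v x) p)
      \<and> (\<forall>x\<in>frontier \<Omega>. 0 \<ge> v x \<and> v x \<ge> u x)
      \<longrightarrow> (\<forall>x\<in>\<Omega>. v x \<ge> u x))
  \<and> (\<forall>k::real. k > 0 \<longrightarrow>
      (\<forall>(u :: real^'n \<Rightarrow> real) v Du Dv Hu Hv.
        C2_with \<Omega> u Du Hu \<and> C2_with \<Omega> v Dv Hv
      \<and> continuous_on (closure \<Omega>) u \<and> continuous_on (closure \<Omega>) v
      \<and> convex_on \<Omega> u \<and> convex_on \<Omega> v
      \<and> (\<forall>x\<in>\<Omega>. x \<bullet> Du x - u x > 0) \<and> (\<forall>x\<in>\<Omega>. x \<bullet> Dv x - v x > 0)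
      \<and> (\<forall>x\<in>\<Omega>. ereal (det (Hu x)) \<ge> negpow (u x) p * ereal ((x \<bullet> Du x - u x) powr (- k)))
      \<and> (\<forall>x\<in>\<Omega>. ereal (det (Hv x)) \<le> negpow (v x) p * ereal ((x \<bullet> Dv x - v x) powr (- k)))
      \<and> (\<forall>x\<in>frontier \<Omega>. 0 \<ge> v x \<and> v x \<ge> u x)
      \<longrightarrow> (\<forall>x\<in>\<Omega>. v x \<ge> u x)))"
proof (intro conjI allI impI)
  fix u v :: "real^'n \<Rightarrow> real" and Du Dv Hu Hv
  assume H: "C2_with \<Omega> u Du Hu \<and> C2_with \<Omega> v Dv Hv
      \<and> continuous_on (closure \<Omega>) u \<and> continuous_on (closure \<Omega>) v
      \<and> convex_on \<Omega> u \<and> convex_on \<Omega> v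
      \<and> (\<forall>x\<in>\<Omega>. ereal (det (Hu x)) \<ge> negpow (u x) p)
      \<and> (\<forall>x\<in>\<Omega>. ereal (det (Hv x)) \<le> negpow (v x) p)
      \<and> (\<forall>x\<in>frontier \<Omega>. 0 \<ge> v x \<and> v x \<ge> u x)"
  have hu: "\<forall>x\<in>\<Omega>. ereal (det (Hu x)) \<ge> negpow (u x) p" using H by blast
  have hv: "\<forall>x\<in>\<Omega>. ereal (det (Hv x)) \<le> negpow (v x) p" using H by blast
  have dp: "\<forall>x\<in>\<Omega>. u x \<noteq> 0 \<and> det (Hu x) \<ge> \<bar>u x\<bar> powr (- p)"
  proof
    fix x assume "x \<in> \<Omega>"
    then have h: "ereal (det (Hu x)) \<ge> negpow (u x) p" using hu by blast
    then have "u x \<noteq> 0" by (auto simp: negpow_def)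
    then show "u x \<noteq> 0 \<and> det (Hu x) \<ge> \<bar>u x\<bar> powr (- p)" using h by (simp add: negpow_def)
  qed
  show "\<forall>x\<in>\<Omega>. v x \<ge> u x"
  proof (rule core[OF assms(1) assms(5) assms(3)])
    show "C2_with \<Omega> u Du Hu" "C2_with \<Omega> v Dv Hv" "continuous_on (closure \<Omega>) u"
      "continuous_on (closure \<Omega>) v" "convex_on \<Omega> u" "\<forall>x\<in>frontier \<Omega>. 0 \<ge> v x \<and> v x \<ge> u x"
      using H by blast+
    show "\<forall>x\<in>\<Omega>. u x \<noteq> 0 \<and> det (Hu x) > 0"
    proof
      fix x assume "x \<in> \<Omega>"
      then have "u x \<noteq> 0" "det (Hu x) \<ge> \<bar>u x\<bar> powr (- p)" using dp by auto
      moreover have pp: "\<bar>u x\<bar> powr (- p) > 0" using \<open>u x \<noteq> 0\<close> by simp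
      ultimately show "u x \<noteq> 0 \<and> det (Hu x) > 0" by linarith
    qed
    show "\<forall>x\<in>\<Omega>. Du x = Dv x \<longrightarrow> v x < u x \<longrightarrow> u x < 0 \<longrightarrow> det (Hv x) < det (Hu x)"
    proof (intro ballI impI)
      fix x assume xO: "x \<in> \<Omega>" and "Du x = Dv x" and vu: "v x < u x" and u0: "u x < 0"
      have v0: "v x \<noteq> 0" using vu u0 by simp
      have "ereal (det (Hv x)) \<le> negpow (v x) p" using hv xO by blast
      then have a: "det (Hv x) \<le> \<bar>v x\<bar> powr (- p)" using v0 by (simp add: negpow_def)
      have b: "\<bar>v x\<bar> powr (- p) < \<bar>u x\<bar> powr (- p)"
        using vu u0 assms(6) by (intro powr_less_mono2_neg) auto
      have c: "det (Hu x) \<ge> \<bar>u x\<bar> powr (- p)" using dp xO by blast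
      show "det (Hv x) < det (Hu x)" using a b c by simp
    qed
  qed
next
  fix k :: real and u v :: "real^'n \<Rightarrow> real" and Du Dv Hu Hv
  assume k: "k > 0"
  assume H: "C2_with \<Omega> u Du Hu \<and> C2_with \<Omega> v Dv Hv
      \<and> continuous_on (closure \<Omega>) u \<and> continuous_on (closure \<Omega>) v
      \<and> convex_on \<Omega> u \<and> convex_on \<Omega> v
      \<and> (\<forall>x\<in>\<Omega>. x \<bullet> Du x - u x > 0) \<and> (\<forall>x\<in>\<Omega>. x \<bullet> Dv x - v x > 0)
      \<and> (\<forall>x\<in>\<Omega>. ereal (det (Hu x)) \<ge> negpow (u x) p * ereal ((x \<bullet> Du x - u x) powr (- k)))
      \<and> (\<forall>x\<in>\<Omega>. ereal (det (Hv x)) \<le> negpow (v x) p * ereal ((x \<bullet> Dv x - v x) powr (- k)))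
      \<and> (\<forall>x\<in>frontier \<Omega>. 0 \<ge> v x \<and> v x \<ge> u x)"
  have au: "\<forall>x\<in>\<Omega>. x \<bullet> Du x - u x > 0" using H by blast
  have av: "\<forall>x\<in>\<Omega>. x \<bullet> Dv x - v x > 0" using H by blast
  have hu: "\<forall>x\<in>\<Omega>. ereal (det (Hu x)) \<ge> negpow (u x) p * ereal ((x \<bullet> Du x - u x) powr (- k))" using H by blast
  have hv: "\<forall>x\<in>\<Omega>. ereal (det (Hv x)) \<le> negpow (v x) p * ereal ((x \<bullet> Dv x - v x) powr (- k))" using H by blast
  have dp: "\<forall>x\<in>\<Omega>. u x \<noteq> 0 \<and> det (Hu x) \<ge> \<bar>u x\<bar> powr (- p) * (x \<bullet> Du x - u x) powr (- k)"
  proof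
    fix x assume xO: "x \<in> \<Omega>"
    then have h: "ereal (det (Hu x)) \<ge> negpow (u x) p * ereal ((x \<bullet> Du x - u x) powr (- k))" using hu by blast
    have "x \<bullet> Du x - u x > 0" using au xO by blast
    then have pp: "(x \<bullet> Du x - u x) powr (- k) > 0" by simp
    have "u x \<noteq> 0"
    proof
      assume "u x = 0"
      then show False using h pp by (simp add: negpow_def)
    qed
    then show "u x \<noteq> 0 \<and> det (Hu x) \<ge> \<bar>u x\<bar> powr (- p) * (x \<bullet> Du x - u x) powr (- k)"
      using h by (simp add: negpow_def)
  qed
  show "\<forall>x\<in>\<Omega>. v x \<ge> u x"
  proof (rule core[OF assms(1) assms(5) assms(3)])
    show "C2_with \<Omega> u Du Hu" "C2_with \<Omega> v Dv Hv" "continuous_on (closure \<Omega>) u"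
      "continuous_on (closure \<Omega>) v" "convex_on \<Omega> u" "\<forall>x\<in>frontier \<Omega>. 0 \<ge> v x \<and> v x \<ge> u x"
      using H by blast+
    show "\<forall>x\<in>\<Omega>. u x \<noteq> 0 \<and> det (Hu x) > 0"
    proof
      fix x assume xO: "x \<in> \<Omega>"
      then have "u x \<noteq> 0" "det (Hu x) \<ge> \<bar>u x\<bar> powr (- p) * (x \<bullet> Du x - u x) powr (- k)" using dp by auto
      moreover have "\<bar>u x\<bar> powr (- p) * (x \<bullet> Du x - u x) powr (- k) > 0"
      proof -
        have "x \<bullet> Du x - u x > 0" using au xO by blast
        then have "(x \<bullet> Du x - u x) powr (- k) > 0" by simp
        moreover have "\<bar>u x\<bar> powr (- p) > 0" using \<open>u x \<noteq> 0\<close> by simp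
        ultimately show ?thesis by simp
      qed
      ultimately show "u x \<noteq> 0 \<and> det (Hu x) > 0" by linarith
    qed
    show "\<forall>x\<in>\<Omega>. Du x = Dv x \<longrightarrow> v x < u x \<longrightarrow> u x < 0 \<longrightarrow> det (Hv x) < det (Hu x)"
    proof (intro ballI impI)
      fix x assume xO: "x \<in> \<Omega>" and DD: "Du x = Dv x" and vu: "v x < u x" and u0: "u x < 0"
      have v0: "v x \<noteq> 0" using vu u0 by simp
      have "ereal (det (Hv x)) \<le> negpow (v x) p * ereal ((x \<bullet> Dv x - v x) powr (- k))" using hv xO by blast
      then have a: "det (Hv x) \<le> \<bar>v x\<bar> powr (- p) * (x \<bullet> Dv x - v x) powr (- k)"
        using v0 by (simp add: negpow_def)
      have b: "\<bar>v x\<bar> powr (- p) < \<bar>u x\<bar> powr (- p)"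
        using vu u0 assms(6) by (intro powr_less_mono2_neg) auto
      have aupos: "x \<bullet> Du x - u x > 0" using au xO by blast
      have b2: "(x \<bullet> Dv x - v x) powr (- k) < (x \<bullet> Du x - u x) powr (- k)"
        using vu aupos k DD by (intro powr_less_mono2_neg) auto
      have "\<bar>v x\<bar> powr (- p) * (x \<bullet> Dv x - v x) powr (- k) < \<bar>u x\<bar> powr (- p) * (x \<bullet> Du x - u x) powr (- k)"
        using b b2 v0 by (intro mult_strict_mono) auto
      moreover have c: "det (Hu x) \<ge> \<bar>u x\<bar> powr (- p) * (x \<bullet> Du x - u x) powr (- k)" using dp xO by blast
      ultimately show "det (Hv x) < det (Hu x)" using a by simp
    qed
  qed
qed

end
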